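(* For all $n\ge2$ and $m\ge1$, the cardinality sensitivity of affine maximizers for $n$ players and $m$ items satisfies $\mu_c(n,m)\le\lceil m/2\rceil$.
   Context: Players $[n]$, items $[m]$, allocations $\Omega=\{A\in\{0,1\}^{n\times m}:\sum_iA_{i,j}=1\ \forall j\}$; $A_i\in\{0,1\}^m$ denotes the bundle (row) of player $i$. An affine maximizer is $f:\mathbb R^{n\times m}\to\Omega$ with $f(\theta)\in\arg\max_{A\in\Omega}\{c_A+\sum_iw_i\theta_i\cdot A_i\}$ for nonzero weights $w_i$ and reals $c_A$. Difference sets $Q_A=\mathrm{cl}\{\theta:f(\theta)=A\}$; indifference complex $\mathcal I(f)=\{\mathcal O\subseteq\Omega:\bigcap_{A\in\mathcal O}Q_A\ne\emptyset\}$. Let $\Psi_{(n,m)}$ be the set of indifference complexes of affine maximizers. With $\mathrm{Cd}(a,b)=\big||a|_1-|b|_1\big|$, define $\mu_c(n,m)=\min_{\mathcal I\in\Psi_{(n,m)}}\max\{\mathrm{Cd}(A_i,B_i): A,B\in F\text{ for some }F\in\mathcal I,\ i\in[n]\}$. *)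

theory Defs
  imports "HOL-Analysis.Analysis"
begin

text \<open>Players are the finite type 'n, items the finite type 'm; a valuation profile
  theta and an allocation A are n x m real matrices (real^'m^'n), row i = player i.\<close>

definition allocations :: "(real^'m::finite^'n::finite) set" where
  "allocations = {A. (\<forall>i j. A$i$j \<in> {0,1}) \<and> (\<forall>j. (\<Sum>i\<in>UNIV. A$i$j) = 1)}"

definition affine_maximizer :: "(real^'m::finite^'n::finite \<Rightarrow> real^'m^'n) \<Rightarrow> bool" where
  "affine_maximizer f \<longleftrightarrow> (\<exists>(w::'n \<Rightarrow> real) (c::real^'m^'n \<Rightarrow> real).
     (\<forall>i. w i \<noteq> 0) \<and>
     (\<forall>\<theta>. f \<theta> \<in> allocations \<and>
        (\<forall>B\<in>allocations. c B + (\<Sum>i\<in>UNIV. w i * (\<theta>$i \<bullet> B$i))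
            \<le> c (f \<theta>) + (\<Sum>i\<in>UNIV. w i * (\<theta>$i \<bullet> (f \<theta>)$i)))))"

definition difference_set :: "(real^'m::finite^'n::finite \<Rightarrow> real^'m^'n) \<Rightarrow> real^'m^'n \<Rightarrow> (real^'m^'n) set" where
  "difference_set f A = closure {\<theta>. f \<theta> = A}"

definition indifference_complex :: "(real^'m::finite^'n::finite \<Rightarrow> real^'m^'n) \<Rightarrow> (real^'m^'n) set set" where
  "indifference_complex f = {S. S \<subseteq> allocations \<and> (\<Inter>A\<in>S. difference_set f A) \<noteq> {}}"

definition Psi :: "(real^'m::finite^'n::finite) set set set" where
  "Psi = {indifference_complex f | f. affine_maximizer f}"

definition l1 :: "real^'m::finite \<Rightarrow> real" where
  "l1 a = (\<Sum>j\<in>UNIV. \<bar>a$j\<bar>)"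

definition Cd :: "real^'m::finite \<Rightarrow> real^'m \<Rightarrow> real" where
  "Cd a b = \<bar>l1 a - l1 b\<bar>"

definition card_sens :: "(real^'m::finite^'n::finite) set set \<Rightarrow> real" where
  "card_sens I = Max {Cd (A$i) (B$i) | A B i. \<exists>F\<in>I. A \<in> F \<and> B \<in> F}"

definition mu_c :: "'n::finite itself \<Rightarrow> 'm::finite itself \<Rightarrow> real" where
  "mu_c _ _ = Min (card_sens ` (Psi :: (real^'m^'n) set set set))"

end

theory Submission
  imports Defs
begin

definition cnt :: "real^'m::finite^'n::finite \<Rightarrow> 'n \<Rightarrow> real" where
  "cnt X i = (\<Sum>k\<in>UNIV. X$i$k)"
definition cc :: "real^'m::finite^'n::finite \<Rightarrow> real" where
  "cc X = - (\<Sum>i\<in>UNIV. (cnt X i)^2)"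
definition LL :: "real^'m::finite^'n::finite \<Rightarrow> real^'m^'n \<Rightarrow> real" where
  "LL t X = (\<Sum>i\<in>UNIV. t$i \<bullet> X$i)"
definition mv :: "real^'m::finite^'n::finite \<Rightarrow> 'm \<Rightarrow> 'n \<Rightarrow> real^'m^'n" where
  "mv X j q = (\<chi> i k. if k = j then (if i = q then 1 else 0) else X$i$k)"

lemma alloc_01: "A \<in> allocations \<Longrightarrow> A$i$j = 0 \<or> A$i$j = 1"
  by (auto simp: allocations_def)

lemma alloc_nonneg: "A \<in> allocations \<Longrightarrow> A$i$j \<ge> 0"
  using alloc_01[of A i j] by auto

lemma alloc_col: "A \<in> allocations \<Longrightarrow> (\<Sum>i\<in>UNIV. A$i$j) = 1"
  by (auto simp: allocations_def)

lemma alloc_other0: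
  assumes A: "A \<in> allocations" and "A$p$j = 1" and "i \<noteq> p"
  shows "A$i$j = 0"
proof -
  have "(\<Sum>i\<in>UNIV. A$i$j) = A$p$j + (\<Sum>i\<in>UNIV-{p}. A$i$j)"
    by (simp add: sum.remove)
  then have "(\<Sum>i\<in>UNIV-{p}. A$i$j) = 0" using alloc_col[OF A] assms(2) by simp
  then have "\<forall>i\<in>UNIV-{p}. A$i$j = 0"
    by (subst sum_nonneg_eq_0_iff[symmetric]) (auto intro: alloc_nonneg[OF A])
  then show ?thesis using assms(3) by auto
qed

lemma alloc_owner:
  assumes A: "A \<in> allocations" shows "\<exists>q. A$q$j = 1"
proof (rule ccontr)
  assume "\<not> ?thesis"
  then have "\<forall>q. A$q$j = 0" using alloc_01[OF A] by blast
  then show False using alloc_col[OF A, of j] by simp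
qed

lemma mv_alloc: "A \<in> allocations \<Longrightarrow> mv A j q \<in> allocations"
  unfolding mv_def allocations_def
proof safe
  fix i k assume "\<forall>i j. A $ i $ j \<in> {0, 1}" "(\<chi> i k. if k = j then if i = q then 1 else 0 else A $ i $ k) $ i $ k \<noteq> 0"
  then show "(\<chi> i k. if k = j then if i = q then 1 else 0 else A $ i $ k) $ i $ k = 1" by (auto; metis)
next
  fix k assume "\<forall>j. (\<Sum>i\<in>UNIV. A $ i $ j) = 1"
  then show "(\<Sum>i\<in>UNIV. (\<chi> i k. if k = j then if i = q then 1 else 0 else A $ i $ k) $ i $ k) = 1"
    by (cases "k = j") auto
qed

lemma finite_alloc: "finite (allocations :: (real^'m::finite^'n::finite) set)"
proof -
  let ?G = "PiE (UNIV::'n set) (\<lambda>_. PiE (UNIV::'m set) (\<lambda>_. {0::real,1}))"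
  have "allocations \<subseteq> (\<lambda>g. \<chi> i k. g i k) ` ?G"
  proof
    fix A :: "real^'m^'n" assume "A \<in> allocations"
    show "A \<in> (\<lambda>g. \<chi> i k. g i k) ` ?G"
    proof (rule image_eqI[where x="\<lambda>i k. A$i$k"])
      show "A = (\<chi> i k. (\<lambda>i k. A$i$k) i k)" by (simp add: vec_eq_iff)
      show "(\<lambda>i k. A$i$k) \<in> ?G" using \<open>A \<in> allocations\<close> by (auto simp: allocations_def)
    qed
  qed
  moreover have "finite ?G" by (intro finite_PiE) auto
  ultimately show ?thesis by (meson finite_imageI finite_subset)
qed

lemma alloc_ne: "(\<chi> i k. if i = p then 1 else 0) \<in> allocations"
  by (auto simp: allocations_def)

lemma row_change:
  fixes x y :: "real^'m::finite"
  shows "(\<Sum>k\<in>UNIV. f k * (if k = j then e else y$k)) = (\<Sum>k\<in>UNIV. f k * y$k) - f j * y$j + f j * e"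
proof -
  have "(\<Sum>k\<in>UNIV. f k * (if k = j then e else y$k)) = f j * e + (\<Sum>k\<in>UNIV-{j}. f k * (if k = j then e else y$k))"
    by (subst sum.remove[of UNIV j]) auto
  also have "(\<Sum>k\<in>UNIV-{j}. f k * (if k = j then e else y$k)) = (\<Sum>k\<in>UNIV-{j}. f k * y$k)"
    by (rule sum.cong) auto
  also have "(\<Sum>k\<in>UNIV. f k * y$k) = f j * y$j + (\<Sum>k\<in>UNIV-{j}. f k * y$k)"
    by (rule sum.remove) auto
  ultimately show ?thesis by simp
qed

lemma col_sum_owner:
  assumes A: "A \<in> allocations" and "A$p$j = 1"
  shows "(\<Sum>i\<in>UNIV. g i * A$i$j) = g p"
proof -
  have "(\<Sum>i\<in>UNIV. g i * A$i$j) = (\<Sum>i\<in>UNIV. if i = p then g i else 0)"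
    by (rule sum.cong) (use alloc_other0[OF assms] assms(2) in auto)
  then show ?thesis by simp
qed

lemma LL_mv:
  assumes A: "A \<in> allocations" and "A$p$j = 1"
  shows "LL t (mv A j q) = LL t A - t$p$j + t$q$j"
proof -
  have row: "t$i \<bullet> (mv A j q)$i = t$i \<bullet> A$i - t$i$j * A$i$j + (if i = q then t$i$j else 0)" for i
    unfolding inner_vec_def mv_def using row_change[of "\<lambda>k. t$i$k" j "if i = q then 1 else 0" "A$i"]
    by simp
  have "LL t (mv A j q) = (\<Sum>i\<in>UNIV. t$i \<bullet> A$i - t$i$j * A$i$j + (if i = q then t$i$j else 0))"
    unfolding LL_def using row by simp
  also have "\<dots> = LL t A - (\<Sum>i\<in>UNIV. t$i$j * A$i$j) + t$q$j"
    by (simp add: LL_def sum.distrib sum_subtractf)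
  finally show ?thesis using col_sum_owner[OF assms, of "\<lambda>i. t$i$j"] by simp
qed

lemma cnt_mv:
  assumes A: "A \<in> allocations" and "A$p$j = 1"
  shows "cnt (mv A j q) i = cnt A i - (if i = p then 1 else 0) + (if i = q then 1 else 0)"
proof -
  have "cnt (mv A j q) i = (\<Sum>k\<in>UNIV. 1 * (if k = j then (if i = q then 1 else 0) else A$i$k))"
    by (simp add: cnt_def mv_def)
  also have "\<dots> = cnt A i - A$i$j + (if i = q then 1 else 0)"
    by (subst row_change) (simp add: cnt_def)
  also have "A$i$j = (if i = p then 1 else 0)" using alloc_other0[OF assms, of i] assms(2) by auto
  finally show ?thesis .
qed

lemma cc_mv:
  assumes A: "A \<in> allocations" and "A$p$j = 1" and "q \<noteq> p"
  shows "cc (mv A j q) = cc A + 2 * cnt A p - 2 * cnt A q - 2"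
proof -
  have "(\<Sum>i\<in>UNIV. (cnt (mv A j q) i)^2) = (\<Sum>i\<in>UNIV. (cnt A i)^2
     + (if i = p then 1 - 2 * cnt A i else 0) + (if i = q then 1 + 2 * cnt A i else 0))"
  proof (rule sum.cong)
    fix i show "(cnt (mv A j q) i)^2 = (cnt A i)^2
     + (if i = p then 1 - 2 * cnt A i else 0) + (if i = q then 1 + 2 * cnt A i else 0)"
      unfolding cnt_mv[OF A assms(2), of q i] using assms(3)
      by (cases "i = p"; cases "i = q") (auto simp: power2_eq_square algebra_simps)
  qed simp
  also have "\<dots> = (\<Sum>i\<in>UNIV. (cnt A i)^2) + (1 - 2 * cnt A p) + (1 + 2 * cnt A q)"
    by (simp add: sum.distrib)
  finally show ?thesis by (simp add: cc_def)
qed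

definition opt :: "real^'m::finite^'n::finite \<Rightarrow> real^'m^'n \<Rightarrow> bool" where
  "opt t X \<longleftrightarrow> (\<forall>C\<in>allocations. cc C + LL t C \<le> cc X + LL t X)"

lemma cnt_Ints: "A \<in> allocations \<Longrightarrow> cnt A i \<in> \<int>"
  unfolding cnt_def by (rule Ints_sum) (use alloc_01 in \<open>metis Ints_0 Ints_1\<close>)

lemma cnt_nonneg: "A \<in> allocations \<Longrightarrow> cnt A i \<ge> 0"
  unfolding cnt_def by (rule sum_nonneg) (use alloc_nonneg in auto)

lemma cnt_two:
  fixes A :: "real^'m::finite^'n::finite"
  assumes A: "A \<in> allocations" and "p \<noteq> q"
  shows "cnt A p + cnt A q \<le> real CARD('m)"
proof -
  have "A$p$k + A$q$k \<le> 1" for k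
  proof -
    have "A$p$k + A$q$k = (\<Sum>i\<in>{p,q}. A$i$k)" using assms(2) by simp
    also have "\<dots> \<le> (\<Sum>i\<in>UNIV. A$i$k)"
      by (rule sum_mono2) (auto intro: alloc_nonneg[OF A])
    finally show ?thesis using alloc_col[OF A] by simp
  qed
  then have "(\<Sum>k\<in>UNIV. A$p$k + A$q$k) \<le> (\<Sum>k\<in>(UNIV::'m set). 1)"
    by (intro sum_mono) simp
  then show ?thesis by (simp add: cnt_def sum.distrib)
qed

lemma cnt_ge1: "A \<in> allocations \<Longrightarrow> A$q$j = 1 \<Longrightarrow> cnt A q \<ge> 1"
  unfolding cnt_def using member_le_sum[of j UNIV "\<lambda>k. A$q$k"] alloc_nonneg by fastforce

lemma int_bound:
  assumes "D \<in> \<int>" "2 * D \<le> real m + 1"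
  shows "D \<le> of_int \<lceil>real m / 2\<rceil>"
proof -
  obtain k where k: "D = of_int k" using assms(1) Ints_cases by blast
  have "of_int k - 1 < real m / 2" using assms(2) k by simp
  then have "k \<le> \<lceil>real m / 2\<rceil>" by (simp add: le_ceiling_iff)
  then show ?thesis using k by simp
qed

lemma key:
  fixes A B :: "real^'m::finite^'n::finite"
  assumes A: "A \<in> allocations" and B: "B \<in> allocations"
    and oA: "opt t A" and oB: "opt t B"
  shows "cnt A p - cnt B p \<le> of_int \<lceil>real CARD('m) / 2\<rceil>"
proof (cases "cnt A p \<le> cnt B p")
  case True
  have "(0::real) \<le> of_int \<lceil>real CARD('m) / 2\<rceil>" by simp
  then show ?thesis using True by linarith
next
  case False
  have "\<exists>j. A$p$j > B$p$j"
  proof (rule ccontr)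
    assume "\<not> ?thesis"
    then have "cnt A p \<le> cnt B p" unfolding cnt_def by (intro sum_mono) (meson not_less)
    then show False using False by simp
  qed
  then obtain j where j: "A$p$j > B$p$j" by blast
  then have Apj: "A$p$j = 1" and Bpj: "B$p$j = 0" using alloc_01[OF A, of p j] alloc_01[OF B, of p j] by auto
  obtain q where Bqj: "B$q$j = 1" using alloc_owner[OF B] by blast
  have qp: "q \<noteq> p" using Bqj Bpj by auto
  have 1: "cc (mv A j q) + LL t (mv A j q) \<le> cc A + LL t A"
    using oA mv_alloc[OF A] unfolding opt_def by blast
  have 2: "cc (mv B j p) + LL t (mv B j p) \<le> cc B + LL t B"
    using oB mv_alloc[OF B] unfolding opt_def by blast
  note e = cc_mv[OF A Apj qp] LL_mv[OF A Apj, of t q] cc_mv[OF B Bqj qp[symmetric]] LL_mv[OF B Bqj, of t p]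
  have ineq: "(cnt A p - cnt B p) - (cnt A q - cnt B q) \<le> 2"
    using 1 2 unfolding e by linarith
  have "cnt A p + cnt A q \<le> real CARD('m)" using cnt_two[OF A qp[symmetric]] .
  moreover have "cnt B q \<ge> 1" using cnt_ge1[OF B Bqj] .
  moreover have "cnt B p \<ge> 0" using cnt_nonneg[OF B] .
  ultimately have "2 * (cnt A p - cnt B p) \<le> real CARD('m) + 1" using ineq by (smt (verit))
  moreover have "cnt A p - cnt B p \<in> \<int>" using cnt_Ints[OF A] cnt_Ints[OF B] by (simp add: Ints_diff)
  ultimately show ?thesis using int_bound by blast
qed

lemma LL_inner: "LL t X = t \<bullet> X"
  by (simp add: LL_def inner_vec_def)

lemma exists_opt: "\<exists>A. A \<in> allocations \<and> opt t (A::real^'m::finite^'n::finite)"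
proof -
  define g where "g X = cc X + LL t X" for X :: "real^'m^'n"
  have ne: "allocations \<noteq> ({}::(real^'m^'n) set)" using alloc_ne by blast
  have "Max (g ` allocations) \<in> g ` allocations"
    by (rule Max_in) (use finite_alloc ne in auto)
  then obtain A where A: "A \<in> allocations" "g A = Max (g ` allocations)" by force
  have "\<forall>C\<in>allocations. g C \<le> g A" using A(2) by (metis Max_ge finite_alloc finite_imageI imageI)
  then show ?thesis using A(1) unfolding opt_def g_def by blast
qed

definition fopt :: "real^'m::finite^'n::finite \<Rightarrow> real^'m^'n" where
  "fopt t = (SOME A. A \<in> allocations \<and> opt t A)"

lemma fopt: "fopt t \<in> allocations \<and> opt t (fopt t)"
  unfolding fopt_def by (rule someI_ex) (rule exists_opt)

lemma fopt_am: "affine_maximizer fopt"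
  unfolding affine_maximizer_def
  apply (rule exI[where x="\<lambda>_. 1"], rule exI[where x=cc])
  using fopt by (auto simp: opt_def LL_def)

lemma diff_opt:
  fixes A :: "real^'m::finite^'n::finite"
  assumes "t \<in> difference_set fopt A" shows "opt t A"
proof -
  have cl: "closed {t. opt t A}"
  proof -
    have "{t. opt t A} = (\<Inter>C\<in>allocations. {t. cc C + t \<bullet> C \<le> cc A + t \<bullet> A})"
      by (auto simp: opt_def LL_inner)
    moreover have "closed {t. cc C + t \<bullet> C \<le> cc A + t \<bullet> A}" for C :: "real^'m^'n"
      by (intro closed_Collect_le continuous_intros)
    ultimately show ?thesis by auto
  qed
  have "{t. fopt t = A} \<subseteq> {t. opt t A}" using fopt by auto
  then have "closure {t. fopt t = A} \<subseteq> {t. opt t A}" using cl by (rule closure_minimal)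
  then show ?thesis using assms unfolding difference_set_def by auto
qed

lemma l1_cnt: "A \<in> allocations \<Longrightarrow> l1 (A$i) = cnt A i"
  unfolding l1_def cnt_def by (intro sum.cong) (auto simp: alloc_nonneg)

theorem mainTheorem10:
  assumes "CARD('n::finite) \<ge> 2"
  shows "mu_c TYPE('n) TYPE('m::finite) \<le> of_int \<lceil>real CARD('m) / 2\<rceil>"
proof -
  define I where "I = indifference_complex (fopt :: real^'m^'n \<Rightarrow> real^'m^'n)"
  define V where "V = {Cd (A$i) (B$i) | (A::real^'m^'n) B i. \<exists>F\<in>I. A \<in> F \<and> B \<in> F}"
  have I_sub: "F \<in> I \<Longrightarrow> F \<subseteq> allocations" for F
    unfolding I_def indifference_complex_def by auto
  have Psi_sub: "(Psi :: (real^'m^'n) set set set) \<subseteq> Pow (Pow allocations)"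
    unfolding Psi_def indifference_complex_def by auto
  have finPsi: "finite (Psi :: (real^'m^'n) set set set)"
    using finite_subset[OF Psi_sub] finite_alloc by auto
  have IPsi: "I \<in> Psi" unfolding Psi_def I_def using fopt_am by blast
  have finV: "finite V"
  proof -
    have "V \<subseteq> (\<lambda>(A::real^'m^'n,B,i). Cd (A$i) (B$i)) ` (allocations \<times> allocations \<times> UNIV)"
    proof
      fix v assume "v \<in> V"
      then obtain A B i F where v: "v = Cd (A$i) (B$i)" and F: "F \<in> I" "A \<in> F" "B \<in> F"
        unfolding V_def by blast
      then have "(A,B,i) \<in> allocations \<times> allocations \<times> UNIV" using I_sub by auto
      then show "v \<in> (\<lambda>(A::real^'m^'n,B,i). Cd (A$i) (B$i)) ` (allocations \<times> allocations \<times> UNIV)"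
        unfolding v by (rule rev_image_eqI) simp
    qed
    then show ?thesis by (rule finite_subset) (intro finite_imageI finite_SigmaI finite_alloc finite_UNIV; simp)
  qed
  have neV: "V \<noteq> {}"
  proof -
    have "{fopt 0} \<in> I" unfolding I_def indifference_complex_def difference_set_def
      using fopt closure_subset by fastforce
    then show ?thesis unfolding V_def by blast
  qed
  have bnd: "v \<le> of_int \<lceil>real CARD('m) / 2\<rceil>" if "v \<in> V" for v
  proof -
    obtain A B i F where v: "v = Cd (A$i) (B$i)" and F: "F \<in> I" "A \<in> F" "B \<in> F"
      using \<open>v \<in> V\<close> unfolding V_def by blast
    have AB: "A \<in> allocations" "B \<in> allocations" using I_sub F by auto
    obtain t where t: "t \<in> (\<Inter>X\<in>F. difference_set fopt X)"
      using F(1) unfolding I_def indifference_complex_def by auto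
    have oA: "opt t A" and oB: "opt t B" using t F diff_opt by auto
    show ?thesis unfolding v Cd_def l1_cnt[OF AB(1)] l1_cnt[OF AB(2)]
      using key[OF AB oA oB, of i] key[OF AB(2,1) oB oA, of i] by linarith
  qed
  have "card_sens I \<le> of_int \<lceil>real CARD('m) / 2\<rceil>"
    unfolding card_sens_def V_def[symmetric] using finV neV bnd by (simp add: Max_le_iff)
  moreover have "mu_c TYPE('n) TYPE('m) \<le> card_sens I"
    unfolding mu_c_def using finPsi IPsi by (intro Min_le) auto
  ultimately show ?thesis by linarith
qed

end
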